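(* Let $f,g\in\mathrm{Diffeo}^-(\mathbb{R})$ with $f(0)=g(0)=0$ and $f\circ f=g\circ g$, and suppose $(T_0f)\circ(T_0f)=X$. Suppose $0$ is a boundary point of $\mathrm{fix}(f\circ f)=\{x\in\mathbb{R}: f(f(x))=x\}$. Then there exists $h\in\mathrm{Diffeo}^+(\mathbb{R})$ with $f=h^{-1}\circ g\circ h$ if and only if $T_0f=T_0g$.
   Context: $\mathrm{Diffeo}(\mathbb{R})$ is the group of $C^\infty$ diffeomorphisms of $\mathbb{R}$ under composition; $\mathrm{Diffeo}^+(\mathbb{R})$ (resp. $\mathrm{Diffeo}^-(\mathbb{R})$) is the set of orientation-preserving (resp. orientation-reversing) diffeomorphisms. For a diffeomorphism $\phi$ with $\phi(0)=0$, $T_0\phi=\phi'(0)X+\frac{\phi''(0)}{2}X^2+\cdots$ is its Taylor series at $0$, viewed as a formal power series under formal composition; $X$ denotes the identity series. *)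

theory Defs
  imports "HOL-Analysis.Analysis" "HOL-Computational_Algebra.Formal_Power_Series"
begin

definition smooth :: "(real \<Rightarrow> real) \<Rightarrow> bool" where
  "smooth f \<longleftrightarrow> (\<forall>k x. (deriv ^^ k) f differentiable (at x))"

definition diffeo :: "(real \<Rightarrow> real) \<Rightarrow> bool" where
  "diffeo f \<longleftrightarrow> bij f \<and> smooth f \<and> smooth (inv f)"

definition diffeo_plus :: "(real \<Rightarrow> real) \<Rightarrow> bool" where
  "diffeo_plus f \<longleftrightarrow> diffeo f \<and> strict_mono f"

definition diffeo_minus :: "(real \<Rightarrow> real) \<Rightarrow> bool" where
  "diffeo_minus f \<longleftrightarrow> diffeo f \<and> (\<forall>x y. x < y \<longrightarrow> f y < f x)"

definition taylor0 :: "(real \<Rightarrow> real) \<Rightarrow> real fps" where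
  "taylor0 f = Abs_fps (\<lambda>n. (deriv ^^ n) f 0 / fact n)"

end

theory Submission
  imports Defs
begin

unbundle no vec_syntax
notation fps_nth (infixl \<open>$\<close> 75)


definition Cn :: "nat \<Rightarrow> (real \<Rightarrow> real) \<Rightarrow> bool" where
  "Cn n f \<longleftrightarrow> (\<forall>k<n. \<forall>x. (deriv ^^ k) f differentiable (at x))"

lemma Cn_0[simp]: "Cn 0 f" by (simp add: Cn_def)

lemma Cn_Suc: "Cn (Suc n) f \<longleftrightarrow> (\<forall>x. f differentiable (at x)) \<and> Cn n (deriv f)"
  unfolding Cn_def
  apply (auto simp: less_Suc_eq_0_disj funpow_Suc_right simp del: funpow.simps)
  done

lemma Cn_mono: "Cn (Suc n) f \<Longrightarrow> Cn n f"
  by (simp add: Cn_def)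

lemma smooth_Cn: "smooth f \<longleftrightarrow> (\<forall>n. Cn n f)"
  unfolding smooth_def Cn_def by (meson lessI)

lemma deriv_of_diff: "(\<And>x. (f::real\<Rightarrow>real) differentiable (at x)) \<Longrightarrow> DERIV f x :> deriv f x"
  by (simp add: DERIV_deriv_iff_real_differentiable)

lemma Cn_add: "Cn n f \<Longrightarrow> Cn n g \<Longrightarrow> Cn n (\<lambda>x. f x + g x)"
proof (induction n arbitrary: f g)
  case 0 then show ?case by simp
next
  case (Suc n)
  have df: "\<And>x. f differentiable (at x)" and dg: "\<And>x. g differentiable (at x)"
    using Suc.prems by (auto simp: Cn_Suc)
  have e: "deriv (\<lambda>x. f x + g x) = (\<lambda>x. deriv f x + deriv g x)"
    by (rule ext, rule DERIV_imp_deriv, intro derivative_intros deriv_of_diff df dg)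
  show ?case using Suc df dg unfolding Cn_Suc e by auto
qed

lemma Cn_mult: "Cn n f \<Longrightarrow> Cn n g \<Longrightarrow> Cn n (\<lambda>x. f x * g x)"
proof (induction n arbitrary: f g)
  case 0 then show ?case by simp
next
  case (Suc n)
  have df: "\<And>x. f differentiable (at x)" and dg: "\<And>x. g differentiable (at x)"
    using Suc.prems by (auto simp: Cn_Suc)
  have e: "deriv (\<lambda>x. f x * g x) = (\<lambda>x. deriv f x * g x + f x * deriv g x)"
    by (rule ext, rule DERIV_imp_deriv, rule derivative_eq_intros, rule deriv_of_diff[OF df], rule deriv_of_diff[OF dg]) auto
  have "Cn n (\<lambda>x. deriv f x * g x)" using Suc Cn_mono by (auto simp: Cn_Suc)
  moreover have "Cn n (\<lambda>x. f x * deriv g x)" using Suc Cn_mono by (auto simp: Cn_Suc)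
  ultimately show ?case using Suc df dg unfolding Cn_Suc e by (auto intro: Cn_add)
qed

lemma Cn_comp: "Cn n f \<Longrightarrow> Cn n g \<Longrightarrow> Cn n (\<lambda>x. f (g x))"
proof (induction n arbitrary: f g)
  case 0 then show ?case by simp
next
  case (Suc n)
  have df: "\<And>x. f differentiable (at x)" and dg: "\<And>x. g differentiable (at x)"
    using Suc.prems by (auto simp: Cn_Suc)
  have e: "deriv (\<lambda>x. f (g x)) = (\<lambda>x. deriv f (g x) * deriv g x)"
    by (rule ext, rule DERIV_imp_deriv, rule DERIV_chain2[OF deriv_of_diff deriv_of_diff], fact, fact)
  have "Cn n (\<lambda>x. deriv f (g x))" using Suc Cn_mono by (auto simp: Cn_Suc)
  then have "Cn n (\<lambda>x. deriv f (g x) * deriv g x)" using Suc by (auto simp: Cn_Suc intro: Cn_mult)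
  moreover have "\<forall>x. (\<lambda>x. f (g x)) differentiable (at x)"
    using df dg by (metis DERIV_chain2 deriv_of_diff real_differentiable_def)
  ultimately show ?case unfolding Cn_Suc e by auto
qed

lemma smooth_add: "smooth f \<Longrightarrow> smooth g \<Longrightarrow> smooth (\<lambda>x. f x + g x)"
  by (simp add: smooth_Cn Cn_add)
lemma smooth_mult: "smooth f \<Longrightarrow> smooth g \<Longrightarrow> smooth (\<lambda>x. f x * g x)"
  by (simp add: smooth_Cn Cn_mult)
lemma smooth_comp: "smooth f \<Longrightarrow> smooth g \<Longrightarrow> smooth (\<lambda>x. f (g x))"
  by (simp add: smooth_Cn Cn_comp)
lemma smooth_comp': "smooth f \<Longrightarrow> smooth g \<Longrightarrow> smooth (f \<circ> g)"
  by (simp add: smooth_comp o_def)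
lemma smooth_deriv: "smooth f \<Longrightarrow> smooth (deriv f)"
  unfolding smooth_def by (metis funpow_Suc_right o_apply)
lemma smooth_diff: "smooth f \<Longrightarrow> f differentiable (at x)"
  unfolding smooth_def by (metis funpow_0)
lemma smooth_DERIV: "smooth f \<Longrightarrow> DERIV f x :> deriv f x"
  using smooth_diff deriv_of_diff by blast
lemma smooth_DERIV_k: "smooth f \<Longrightarrow> DERIV ((deriv^^k) f) x :> (deriv^^(Suc k)) f x"
  unfolding smooth_def by (simp add: deriv_of_diff)
lemma smooth_isCont: "smooth f \<Longrightarrow> isCont ((deriv^^k) f) x"
  unfolding smooth_def using differentiable_imp_continuous_within by blast

lemma deriv_iter_add: "smooth f \<Longrightarrow> smooth g \<Longrightarrow>
   (deriv^^k) (\<lambda>x. f x + g x) = (\<lambda>x. (deriv^^k) f x + (deriv^^k) g x)"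
proof (induction k)
  case 0 then show ?case by simp
next
  case (Suc k)
  have "(deriv ^^ Suc k) (\<lambda>x. f x + g x) = deriv ((deriv ^^ k) (\<lambda>x. f x + g x))" by simp
  also have "\<dots> = deriv (\<lambda>x. (deriv ^^ k) f x + (deriv ^^ k) g x)" using Suc by simp
  also have "\<dots> = (\<lambda>x. (deriv ^^ Suc k) f x + (deriv ^^ Suc k) g x)"
    by (rule ext, rule DERIV_imp_deriv, rule DERIV_add, rule smooth_DERIV_k[OF Suc.prems(1)],
        rule smooth_DERIV_k[OF Suc.prems(2)])
  finally show ?case .
qed

lemma smooth_id: "smooth (\<lambda>x. x)"
proof -
  have d: "(deriv^^k) (\<lambda>x::real. x) = (if k = 0 then (\<lambda>x. x) else if k = 1 then (\<lambda>_. 1) else (\<lambda>_. 0))" for k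
  proof (induction k)
    case (Suc k) then show ?case by (auto simp: deriv_const)
  qed simp
  show ?thesis unfolding smooth_def d by simp
qed

lemma deriv_iter_id: "(deriv^^k) (\<lambda>x::real. x) = (if k = 0 then (\<lambda>x. x) else if k = 1 then (\<lambda>_. 1) else (\<lambda>_. 0))"
proof (induction k)
  case (Suc k) then show ?case by (auto simp: deriv_const)
qed simp




lemma taylor0_nth: "taylor0 f $ n = (deriv^^n) f 0 / fact n"
  by (simp add: taylor0_def)

lemma taylor0_deriv: "fps_deriv (taylor0 f) = taylor0 (deriv f)"
proof (rule fps_ext)
  fix n
  have "(deriv^^(Suc n)) f 0 = (deriv^^n) (deriv f) 0" by (simp add: funpow_Suc_right del: funpow.simps)
  then show "fps_deriv (taylor0 f) $ n = taylor0 (deriv f) $ n"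
    by (simp add: taylor0_nth del: funpow.simps)
qed

lemma taylor0_Suc: "taylor0 f $ Suc n = taylor0 (deriv f) $ n / of_nat (Suc n)"
proof -
  have "taylor0 (deriv f) $ n = of_nat (Suc n) * taylor0 f $ Suc n"
    using arg_cong[OF taylor0_deriv[of f], of "\<lambda>F. F $ n"] by simp
  then show ?thesis by (simp add: field_simps)
qed

lemma taylor0_0[simp]: "taylor0 f $ 0 = f 0" by (simp add: taylor0_nth)

lemma taylor0_add: "smooth f \<Longrightarrow> smooth g \<Longrightarrow> taylor0 (\<lambda>x. f x + g x) = taylor0 f + taylor0 g"
  by (rule fps_ext) (simp add: taylor0_nth deriv_iter_add add_divide_distrib)

lemma deriv_mult_fun: "smooth u \<Longrightarrow> smooth v \<Longrightarrow>
   deriv (\<lambda>x. u x * v x) = (\<lambda>x. deriv u x * v x + u x * deriv v x)"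
  by (rule ext, rule DERIV_imp_deriv, rule derivative_eq_intros, rule smooth_DERIV, assumption,
      rule smooth_DERIV, assumption) auto

lemma deriv_comp_fun: "smooth f \<Longrightarrow> smooth g \<Longrightarrow>
   deriv (\<lambda>x. f (g x)) = (\<lambda>x. deriv f (g x) * deriv g x)"
  by (rule ext, rule DERIV_imp_deriv, rule DERIV_chain2[OF smooth_DERIV smooth_DERIV])

lemma taylor0_mult_nth: "\<forall>u v. smooth u \<longrightarrow> smooth v \<longrightarrow>
    taylor0 (\<lambda>x. u x * v x) $ n = (taylor0 u * taylor0 v) $ n"
proof (induction n)
  case 0 then show ?case by simp
next
  case (Suc n)
  show ?case
  proof (intro allI impI)
    fix u v :: "real \<Rightarrow> real" assume su: "smooth u" and sv: "smooth v"
    have "taylor0 (\<lambda>x. u x * v x) $ Suc n = taylor0 (\<lambda>x. deriv u x * v x + u x * deriv v x) $ n / of_nat (Suc n)"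
      by (simp add: taylor0_Suc deriv_mult_fun su sv)
    also have "taylor0 (\<lambda>x. deriv u x * v x + u x * deriv v x) = taylor0 (\<lambda>x. deriv u x * v x) + taylor0 (\<lambda>x. u x * deriv v x)"
      by (rule taylor0_add, rule smooth_mult[OF smooth_deriv[OF su] sv], rule smooth_mult[OF su smooth_deriv[OF sv]])
    also have "\<dots> $ n = (taylor0 (deriv u) * taylor0 v) $ n + (taylor0 u * taylor0 (deriv v)) $ n"
      using Suc.IH su sv smooth_deriv by simp
    also have "\<dots> = fps_deriv (taylor0 u * taylor0 v) $ n"
      by (simp add: taylor0_deriv fps_deriv_mult del: fps_deriv_nth)
    finally have "taylor0 (\<lambda>x. u x * v x) $ Suc n = fps_deriv (taylor0 u * taylor0 v) $ n / of_nat (Suc n)" .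
    then show "taylor0 (\<lambda>x. u x * v x) $ Suc n = (taylor0 u * taylor0 v) $ Suc n"
      by (simp only: fps_deriv_nth) simp
  qed
qed

lemma taylor0_mult: "smooth u \<Longrightarrow> smooth v \<Longrightarrow> taylor0 (\<lambda>x. u x * v x) = taylor0 u * taylor0 v"
  by (rule fps_ext) (simp add: taylor0_mult_nth)

lemma fps_mult_nth_cong: "(\<And>i. i \<le> n \<Longrightarrow> a $ i = b $ i) \<Longrightarrow> (a * c) $ n = (b * c) $ n"
  by (simp add: fps_mult_nth)

lemma taylor0_comp_nth: "\<forall>f g. smooth f \<longrightarrow> smooth g \<longrightarrow> g 0 = 0 \<longrightarrow>
    taylor0 (\<lambda>x. f (g x)) $ n = (taylor0 f oo taylor0 g) $ n"
proof (induction n rule: less_induct)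
  case (less n)
  show ?case
  proof (cases n)
    case 0 then show ?thesis by simp
  next
    case (Suc j)
    show ?thesis
    proof (intro allI impI)
      fix f g :: "real \<Rightarrow> real" assume sf: "smooth f" and sg: "smooth g" and g0: "g 0 = 0"
      have "taylor0 (\<lambda>x. f (g x)) $ Suc j = taylor0 (\<lambda>x. deriv f (g x) * deriv g x) $ j / of_nat (Suc j)"
        by (simp add: taylor0_Suc deriv_comp_fun sf sg)
      also have "taylor0 (\<lambda>x. deriv f (g x) * deriv g x) = taylor0 (\<lambda>x. deriv f (g x)) * taylor0 (deriv g)"
        by (rule taylor0_mult, rule smooth_comp[OF smooth_deriv[OF sf] sg], rule smooth_deriv[OF sg])
      also have "\<dots> $ j = ((taylor0 (deriv f) oo taylor0 g) * taylor0 (deriv g)) $ j"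
      proof (rule fps_mult_nth_cong)
        fix i assume "i \<le> j"
        then have "i < n" using Suc by simp
        then show "taylor0 (\<lambda>x. deriv f (g x)) $ i = (taylor0 (deriv f) oo taylor0 g) $ i"
          using less.IH[of i] smooth_deriv[OF sf] sg g0 by blast
      qed
      also have "\<dots> = fps_deriv (taylor0 f oo taylor0 g) $ j"
      proof -
        have "taylor0 g $ 0 = 0" using g0 by simp
        then show ?thesis by (simp only: fps_compose_deriv taylor0_deriv)
      qed
      finally have "taylor0 (\<lambda>x. f (g x)) $ Suc j = fps_deriv (taylor0 f oo taylor0 g) $ j / of_nat (Suc j)" .
      then show "taylor0 (\<lambda>x. f (g x)) $ n = (taylor0 f oo taylor0 g) $ n"
        unfolding Suc by (simp only: fps_deriv_nth) simp
    qed
  qed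
qed

lemma taylor0_comp: "smooth f \<Longrightarrow> smooth g \<Longrightarrow> g 0 = 0 \<Longrightarrow>
    taylor0 (f \<circ> g) = taylor0 f oo taylor0 g"
  unfolding o_def by (rule fps_ext) (simp add: taylor0_comp_nth)

lemma taylor0_id: "taylor0 (\<lambda>x::real. x) = fps_X"
  by (rule fps_ext) (simp add: taylor0_nth deriv_iter_id)

lemma taylor0_id': "taylor0 id = fps_X"
  unfolding id_def by (rule taylor0_id)

lemma taylor0_eq_X_iff: "taylor0 f = fps_X \<longleftrightarrow> (\<forall>k. (deriv^^k) f 0 = (if k = 1 then 1 else 0))"
proof -
  have "taylor0 f = fps_X \<longleftrightarrow> (\<forall>k. taylor0 f $ k = fps_X $ k)" by (auto intro: fps_ext)
  also have "\<dots> \<longleftrightarrow> (\<forall>k. (deriv^^k) f 0 = (if k = 1 then 1 else 0))"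
    by (simp add: taylor0_nth)
  finally show ?thesis .
qed



definition glue :: "(real \<Rightarrow> real) \<Rightarrow> (real \<Rightarrow> real) \<Rightarrow> real \<Rightarrow> real" where
  "glue a b = (\<lambda>x. if 0 \<le> x then a x else b x)"

lemma glue_DERIV:
  assumes da: "\<And>x. DERIV a x :> a' x" and db: "\<And>x. DERIV b x :> b' x"
    and e0: "a 0 = b 0" and e1: "a' 0 = b' 0"
  shows "DERIV (glue a b) x :> glue a' b' x"
proof -
  consider "x > 0" | "x < 0" | "x = 0" by linarith
  then show ?thesis
  proof cases
    case 1
    have ev: "eventually (\<lambda>y. y \<in> {0<..}) (nhds x)"
      using 1 by (intro eventually_nhds_in_open) auto
    have "eventually (\<lambda>y. glue a b y = a y) (nhds x)"
      by (rule eventually_mono[OF ev]) (auto simp: glue_def)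
    then have "DERIV (glue a b) x :> a' x \<longleftrightarrow> DERIV a x :> a' x"
      by (intro DERIV_cong_ev) auto
    then show ?thesis using da 1 by (simp add: glue_def)
  next
    case 2
    have ev: "eventually (\<lambda>y. y \<in> {..<0}) (nhds x)"
      using 2 by (intro eventually_nhds_in_open) auto
    have "eventually (\<lambda>y. glue a b y = b y) (nhds x)"
      by (rule eventually_mono[OF ev]) (auto simp: glue_def)
    then have "DERIV (glue a b) x :> b' x \<longleftrightarrow> DERIV b x :> b' x"
      by (intro DERIV_cong_ev) auto
    then show ?thesis using db 2 by (simp add: glue_def)
  next
    case 3
    have qa: "((\<lambda>y. (a y - a 0) / (y - 0)) \<longlongrightarrow> a' 0) (at 0)"
      using da[of 0] by (simp add: has_field_derivative_iff)
    have qb: "((\<lambda>y. (b y - b 0) / (y - 0)) \<longlongrightarrow> b' 0) (at 0)"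
      using db[of 0] by (simp add: has_field_derivative_iff)
    have l: "((\<lambda>y. (glue a b y - glue a b 0) / (y - 0)) \<longlongrightarrow> a' 0) (at_left 0)"
    proof -
      have lim: "((\<lambda>y. (b y - b 0) / (y - 0)) \<longlongrightarrow> b' 0) (at_left 0)"
        using qb by (rule filterlim_mono) (simp, rule at_le, simp)
      have ev: "eventually (\<lambda>y. (b y - b 0) / (y - 0) = (glue a b y - glue a b 0) / (y - 0)) (at_left (0::real))"
        unfolding eventually_at_filter glue_def using e0 by (auto intro!: always_eventually)
      show ?thesis using tendsto_cong[OF ev] lim e1 by simp
    qed
    have r: "((\<lambda>y. (glue a b y - glue a b 0) / (y - 0)) \<longlongrightarrow> a' 0) (at_right 0)"
    proof -
      have lim: "((\<lambda>y. (a y - a 0) / (y - 0)) \<longlongrightarrow> a' 0) (at_right 0)"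
        using qa by (rule filterlim_mono) (simp, rule at_le, simp)
      have ev: "eventually (\<lambda>y. (a y - a 0) / (y - 0) = (glue a b y - glue a b 0) / (y - 0)) (at_right (0::real))"
        unfolding eventually_at_filter glue_def by (auto intro!: always_eventually)
      show ?thesis using tendsto_cong[OF ev] lim by simp
    qed
    have "DERIV (glue a b) 0 :> a' 0"
      unfolding has_field_derivative_iff using l r by (simp add: filterlim_at_split)
    then show ?thesis using 3 by (simp add: glue_def)
  qed
qed

lemma glue_deriv_iter:
  assumes sa: "smooth a" and sb: "smooth b" and e: "\<And>k. (deriv^^k) a 0 = (deriv^^k) b 0"
  shows "(deriv^^k) (glue a b) = glue ((deriv^^k) a) ((deriv^^k) b)"
proof (induction k)
  case 0 then show ?case by simp
next
  case (Suc k)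
  have "(deriv^^Suc k) (glue a b) = deriv (glue ((deriv^^k) a) ((deriv^^k) b))" using Suc by simp
  also have "\<dots> = glue ((deriv^^Suc k) a) ((deriv^^Suc k) b)"
    by (rule ext, rule DERIV_imp_deriv, rule glue_DERIV, rule smooth_DERIV_k[OF sa],
        rule smooth_DERIV_k[OF sb], rule e, rule e)
  finally show ?case .
qed

lemma glue_smooth:
  assumes sa: "smooth a" and sb: "smooth b" and e: "\<And>k. (deriv^^k) a 0 = (deriv^^k) b 0"
  shows "smooth (glue a b)"
  unfolding smooth_def glue_deriv_iter[OF assms]
proof (intro allI)
  fix k x
  have "DERIV (glue ((deriv ^^ k) a) ((deriv ^^ k) b)) x :> glue ((deriv ^^ Suc k) a) ((deriv ^^ Suc k) b) x"
    by (rule glue_DERIV, rule smooth_DERIV_k[OF sa], rule smooth_DERIV_k[OF sb], rule e, rule e)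
  then show "glue ((deriv ^^ k) a) ((deriv ^^ k) b) differentiable at x"
    using real_differentiable_def by blast
qed



lemma dm_facts:
  assumes "diffeo_minus f"
  shows "bij f" "smooth f" "smooth (inv f)" "\<And>x. inv f (f x) = x" "\<And>y. f (inv f y) = y"
    "\<And>x y. x < y \<Longrightarrow> f y < f x"
  using assms unfolding diffeo_minus_def diffeo_def
  by (auto simp: bij_is_inj bij_is_surj surj_f_inv_f)

lemma dm_inv_dec:
  assumes "diffeo_minus f" "x < y" shows "inv f y < inv f x"
proof (rule ccontr)
  assume "\<not> ?thesis"
  then have "inv f x \<le> inv f y" by simp
  then have "f (inv f y) \<le> f (inv f x)"
    using dm_facts(6)[OF assms(1)] by (cases "inv f x = inv f y") (auto simp: less_imp_le)
  then show False using assms(2) dm_facts(5)[OF assms(1)] by simp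
qed

lemma taylor_inv_comp:
  assumes "diffeo_minus f" "f 0 = 0"
  shows "taylor0 (inv f) oo taylor0 f = fps_X"
proof -
  have "inv f \<circ> f = id" using dm_facts(4)[OF assms(1)] by (auto simp: fun_eq_iff)
  then have "taylor0 (inv f \<circ> f) = fps_X" by (simp add: taylor0_id')
  then show ?thesis using taylor0_comp dm_facts[OF assms(1)] assms(2) by metis
qed

lemma taylorX_iter: "taylor0 \<phi> = fps_X \<Longrightarrow> (deriv^^k) (\<lambda>x. x) 0 = (deriv^^k) \<phi> 0"
  by (simp add: taylor0_eq_X_iff deriv_iter_id)

lemma reverse_dir:
  fixes f g :: "real \<Rightarrow> real"
  assumes df: "diffeo_minus f" and dg: "diffeo_minus g"
    and f0: "f 0 = 0" and g0: "g 0 = 0"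
    and ff: "f \<circ> f = g \<circ> g"
    and T: "taylor0 f = taylor0 g"
  shows "\<exists>h. diffeo_plus h \<and> f = inv h \<circ> g \<circ> h"
proof -
  note F = dm_facts[OF df] and G = dm_facts[OF dg]
  define \<phi> where "\<phi> = (\<lambda>x. inv g (f x))"
  define \<psi> where "\<psi> = (\<lambda>x. inv f (g x))"
  define h where "h = glue (\<lambda>x. x) \<phi>"
  define k where "k = glue (\<lambda>x. x) \<psi>"
  have ig0: "inv g 0 = 0" using G(4)[of 0] g0 by simp
  have if0: "inv f 0 = 0" using F(4)[of 0] f0 by simp
  have fneg: "0 < f x" if "x < 0" for x using F(6)[OF that] f0 by simp
  have gneg: "0 < g x" if "x < 0" for x using G(6)[OF that] g0 by simp
  have gpos: "g x < 0" if "0 < x" for x using G(6)[OF that] g0 by simp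
  have igpos: "inv g y < 0" if "0 < y" for y using dm_inv_dec[OF dg that] ig0 by simp
  have ifpos: "inv f y < 0" if "0 < y" for y using dm_inv_dec[OF df that] if0 by simp
  have sphi: "smooth \<phi>" unfolding \<phi>_def by (rule smooth_comp[OF G(3) F(2)])
  have spsi: "smooth \<psi>" unfolding \<psi>_def by (rule smooth_comp[OF F(3) G(2)])
  have Tphi: "taylor0 \<phi> = fps_X"
  proof -
    have "taylor0 \<phi> = taylor0 (inv g) oo taylor0 f"
      unfolding \<phi>_def using taylor0_comp[OF G(3) F(2) f0] by (simp add: o_def)
    then show ?thesis using T taylor_inv_comp[OF dg g0] by simp
  qed
  have Tpsi: "taylor0 \<psi> = fps_X"
  proof -
    have "taylor0 \<psi> = taylor0 (inv f) oo taylor0 g"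
      unfolding \<psi>_def using taylor0_comp[OF F(3) G(2) g0] by (simp add: o_def)
    then show ?thesis using T taylor_inv_comp[OF df f0] by simp
  qed
  have sh: "smooth h" unfolding h_def
    by (rule glue_smooth[OF smooth_id sphi taylorX_iter[OF Tphi]])
  have sk: "smooth k" unfolding k_def
    by (rule glue_smooth[OF smooth_id spsi taylorX_iter[OF Tpsi]])
  have ffx: "f (f x) = g (g x)" for x using ff by (metis comp_apply)
  have kh: "k (h x) = x" for x
  proof (cases "0 \<le> x")
    case True then show ?thesis by (simp add: h_def k_def glue_def)
  next
    case False
    then have "\<phi> x < 0" unfolding \<phi>_def using fneg igpos by simp
    then show ?thesis using False by (simp add: h_def k_def glue_def \<psi>_def \<phi>_def G(5) F(4))
  qed
  have hk: "h (k x) = x" for x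
  proof (cases "0 \<le> x")
    case True then show ?thesis by (simp add: h_def k_def glue_def)
  next
    case False
    then have "\<psi> x < 0" unfolding \<psi>_def using gneg ifpos by simp
    then show ?thesis using False by (simp add: h_def k_def glue_def \<psi>_def \<phi>_def G(4) F(5))
  qed
  have invh: "inv h = k" by (rule inv_equality) (use kh hk in auto)
  have bh: "bij h" by (metis bijI' kh hk)
  have smh: "strict_mono h"
  proof (rule strict_monoI)
    fix x y :: real assume xy: "x < y"
    consider "0 \<le> x" | "x < 0" "0 \<le> y" | "y < 0" by linarith
    then show "h x < h y"
    proof cases
      case 1 then show ?thesis using xy by (simp add: h_def glue_def)
    next
      case 2
      then have "\<phi> x < 0" unfolding \<phi>_def using fneg igpos by simp
      then show ?thesis using 2 by (simp add: h_def glue_def)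
    next
      case 3
      have "f y < f x" using F(6)[OF xy] .
      then have "inv g (f x) < inv g (f y)" by (rule dm_inv_dec[OF dg])
      then show ?thesis using 3 xy by (simp add: h_def glue_def \<phi>_def)
    qed
  qed
  have dp: "diffeo_plus h"
    unfolding diffeo_plus_def diffeo_def using bh sh sk smh invh by simp
  have conj: "f = inv h \<circ> g \<circ> h"
  proof (rule ext)
    fix x :: real
    consider "x = 0" | "0 < x" | "x < 0" by linarith
    then show "f x = (inv h \<circ> g \<circ> h) x"
    proof cases
      case 1 then show ?thesis unfolding invh by (simp add: h_def k_def glue_def f0 g0)
    next
      case 2
      have "g x < 0" using gpos[OF 2] .
      then show ?thesis using 2 unfolding invh by (simp add: h_def k_def glue_def \<psi>_def ffx[symmetric] F(4))
    next
      case 3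
      have "\<phi> x < 0" unfolding \<phi>_def using fneg[OF 3] igpos by simp
      moreover have "g (\<phi> x) = f x" unfolding \<phi>_def by (simp add: G(5))
      ultimately show ?thesis using 3 fneg[OF 3] unfolding invh by (simp add: h_def k_def glue_def)
    qed
  qed
  show ?thesis using dp conj by blast
qed



lemma taylor_bound:
  assumes su: "smooth u" and n: "0 < n"
  shows "\<exists>B\<ge>0. \<forall>x. 0 \<le> x \<and> x \<le> 1 \<longrightarrow>
     \<bar>u x - (\<Sum>k<n. (deriv^^k) u 0 / fact k * x^k)\<bar> \<le> B * x^n"
proof -
  have "continuous_on {0..1} ((deriv^^n) u)"
    by (rule continuous_at_imp_continuous_on) (simp add: smooth_isCont[OF su])
  then have "bounded ((deriv^^n) u ` {0..1})"
    by (intro compact_imp_bounded compact_continuous_image) auto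
  then obtain B0 where B0: "\<And>t. t \<in> {0..1} \<Longrightarrow> \<bar>(deriv^^n) u t\<bar> \<le> B0"
    unfolding bounded_real by blast
  have B0nn: "0 \<le> B0" using B0[of 0] by auto
  show ?thesis
  proof (intro exI[of _ "B0 / fact n"] conjI allI impI)
    show "0 \<le> B0 / fact n" using B0nn by simp
    fix x :: real assume x: "0 \<le> x \<and> x \<le> 1"
    show "\<bar>u x - (\<Sum>k<n. (deriv^^k) u 0 / fact k * x^k)\<bar> \<le> B0 / fact n * x^n"
    proof (cases "x = 0")
      case True
      have "(\<Sum>k<n. (deriv^^k) u 0 / fact k * x^k) = (\<Sum>k<n. if k = 0 then u 0 else 0)"
        using True by (intro sum.cong) auto
      also have "\<dots> = u 0" using n by simp
      finally show ?thesis using True n B0nn by (simp add: zero_power)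
    next
      case False
      have "\<exists>t. (if x < 0 then x < t \<and> t < 0 else 0 < t \<and> t < x) \<and>
          u x = (\<Sum>m<n. ((deriv^^m) u 0 / fact m) * (x - 0)^m) + ((deriv^^n) u t / fact n) * (x - 0)^n"
        by (rule Taylor[where a=0 and b=1]) (use n x False smooth_DERIV_k[OF su] in auto)
      then obtain t where t: "0 < t" "t < x"
        and eq: "u x = (\<Sum>m<n. ((deriv^^m) u 0 / fact m) * x^m) + ((deriv^^n) u t / fact n) * x^n"
        using x by auto
      have "\<bar>u x - (\<Sum>k<n. (deriv^^k) u 0 / fact k * x^k)\<bar> = \<bar>(deriv^^n) u t\<bar> / fact n * x^n"
        using eq x by (simp add: abs_mult)
      also have "\<dots> \<le> B0 / fact n * x^n"
        using B0[of t] t x by (intro mult_right_mono divide_right_mono) auto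
      finally show ?thesis .
    qed
  qed
qed

lemma sum_X_coeffs: "(\<Sum>k<n. (if k = 1 then 1 else 0) / fact k * (x::real)^k) = (if 1 < n then x else 0)"
proof (induction n)
  case (Suc n) then show ?case by (cases "n = 1") auto
qed simp

lemma flat_bound:
  assumes sF: "smooth F" and TF: "\<And>k. (deriv^^k) F 0 = (if k = 1 then 1 else 0)" and K: "1 \<le> K"
  shows "\<exists>A\<ge>0. \<forall>x. 0 \<le> x \<and> x \<le> 1 \<longrightarrow> \<bar>F x - x\<bar> \<le> A * x^(K+1)"
proof -
  obtain B where B: "B \<ge> 0" "\<And>x. 0 \<le> x \<and> x \<le> 1 \<Longrightarrow>
     \<bar>F x - (\<Sum>k<K+1. (deriv^^k) F 0 / fact k * x^k)\<bar> \<le> B * x^(K+1)"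
    using taylor_bound[OF sF, of "K+1"] by auto
  have "(\<Sum>k<K+1. (deriv^^k) F 0 / fact k * x^k) = x" for x :: real
    using sum_X_coeffs[where n="K+1" and x=x] K by (simp only: TF) simp
  then show ?thesis using B by auto
qed

lemma lead_bound:
  fixes c :: real
  assumes sh: "smooth h" and m: "1 \<le> m"
    and low: "\<And>j. j < m \<Longrightarrow> (deriv^^j) h 0 = (if j = 1 then 1 else 0)"
    and top: "(deriv^^m) h 0 = (if m = 1 then 1 else 0) - c * fact m"
  shows "\<exists>M\<ge>0. \<forall>\<xi>. 0 \<le> \<xi> \<and> \<xi> \<le> 1 \<longrightarrow> \<bar>(1 - deriv h \<xi>) - m * c * \<xi>^(m-1)\<bar> \<le> M * \<xi>^m"
proof -
  obtain m' where mm: "m = Suc m'" using m by (cases m) auto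
  have D: "(deriv^^k) (deriv h) 0 = (deriv^^Suc k) h 0" for k
    by (simp add: funpow_Suc_right del: funpow.simps)
  have s1: "(\<Sum>k<m'. (deriv^^k) (deriv h) 0 / fact k * \<xi>^k) = (if 0 < m' then 1 else 0)" for \<xi> :: real
  proof -
    have "(\<Sum>k<m'. (deriv^^k) (deriv h) 0 / fact k * \<xi>^k) = (\<Sum>k<m'. if k = 0 then 1 else 0)"
      by (intro sum.cong refl) (simp add: D low mm del: funpow.simps)
    also have "\<dots> = (if 0 < m' then 1 else 0)" by simp
    finally show ?thesis .
  qed
  have s2: "(deriv^^m') (deriv h) 0 / fact m' * \<xi>^m' = (if m = 1 then 1 else 0) / fact m' * \<xi>^m' - m * c * \<xi>^m'" for \<xi> :: real
  proof -
    have "(deriv^^m') (deriv h) 0 = (if m = 1 then 1 else 0) - c * fact m"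
      using D[of m'] top mm by simp
    moreover have "fact m = m * (fact m' :: real)" using mm by simp
    ultimately have "(deriv^^m') (deriv h) 0 = (if m = 1 then 1 else 0) - m * c * fact m'" by simp
    then show ?thesis by (simp add: diff_divide_distrib left_diff_distrib)
  qed
  have sum: "(\<Sum>k<m. (deriv^^k) (deriv h) 0 / fact k * \<xi>^k) = 1 - m * c * \<xi>^(m-1)" for \<xi> :: real
    unfolding mm sum.lessThan_Suc s1 s2 by (cases m') auto
  obtain B where B: "B \<ge> 0" "\<And>x. 0 \<le> x \<and> x \<le> 1 \<Longrightarrow>
     \<bar>deriv h x - (\<Sum>k<m. (deriv^^k) (deriv h) 0 / fact k * x^k)\<bar> \<le> B * x^m"
    using taylor_bound[OF smooth_deriv[OF sh], of m] m by auto
  show ?thesis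
  proof (intro exI[of _ B] conjI allI impI)
    fix \<xi> :: real assume "0 \<le> \<xi> \<and> \<xi> \<le> 1"
    then have "\<bar>deriv h \<xi> - (1 - m * c * \<xi>^(m-1))\<bar> \<le> B * \<xi>^m" using B(2)[of \<xi>] sum[of \<xi>] by simp
    then show "\<bar>(1 - deriv h \<xi>) - m * c * \<xi>^(m-1)\<bar> \<le> B * \<xi>^m" by (simp add: abs_minus_commute)
  qed (use B in auto)
qed



lemma pow_le_1_mono: "0 \<le> (x::real) \<Longrightarrow> x \<le> 1 \<Longrightarrow> 1 \<le> m \<Longrightarrow> x^m \<le> x^(m-1)"
  by (metis One_nat_def Suc_pred le_imp_less_Suc less_one mult_left_le_one_le not_le power_Suc
      zero_le_power)

lemma one_minus_pow: "0 \<le> (t::real) \<Longrightarrow> t \<le> 1 \<Longrightarrow> (1 - t)^K * (1 + K * t) \<le> 1"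
proof -
  assume t: "0 \<le> t" "t \<le> 1"
  have "1 + K * t \<le> (1 + t)^K" using Bernoulli_inequality[of t K] t by simp
  then have "(1 - t)^K * (1 + K * t) \<le> (1 - t)^K * (1 + t)^K"
    using t by (intro mult_left_mono) auto
  also have "\<dots> = (1 - t^2)^K" by (simp add: power_mult_distrib[symmetric] power2_eq_square algebra_simps)
  also have "\<dots> \<le> 1" using t by (intro power_le_one) (auto simp: power2_eq_square mult_le_one)
  finally show ?thesis .
qed

lemma contract_step:
  fixes h F :: "real \<Rightarrow> real" and c M \<beta> \<epsilon>0 A0 A1 x :: real and m K :: nat
  assumes sh: "smooth h" and smono: "strict_mono h" and h0: "h 0 = 0"
    and m: "1 \<le> m" and c: "0 < c" and M: "0 \<le> M"
    and lead: "\<And>\<xi>. 0 \<le> \<xi> \<Longrightarrow> \<xi> \<le> 1 \<Longrightarrow> \<bar>(1 - deriv h \<xi>) - m*c*\<xi>^(m-1)\<bar> \<le> M*\<xi>^m"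
    and \<beta>: "0 < \<beta>" and hb: "\<And>\<xi>. 0 < \<xi> \<Longrightarrow> \<xi> < \<epsilon>0 \<Longrightarrow> \<beta> \<le> deriv h \<xi>"
    and A0: "A0 = m*c*2^(m-1) + M*2^m" and KA: "A0 \<le> K * c * \<beta> / 2"
    and A1: "0 \<le> A1" "\<And>x. 0 \<le> x \<Longrightarrow> x \<le> 1 \<Longrightarrow> \<bar>F x - x\<bar> \<le> A1 * x^2"
    and comm: "\<And>x. h (F x) = F (h x)"
    and x: "0 < x" "x \<le> 1/2" "2 * x < \<epsilon>0" "A1 * x \<le> 1/2" "M * x \<le> c/2"
  shows "0 < h x \<and> h x \<le> x - (c/2)*x^m \<and>
     (F x \<noteq> x \<longrightarrow> (h x / x)^K * \<bar>F x - x\<bar> \<le> \<bar>F (h x) - h x\<bar>)"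
proof -
  have hpos: "0 < h x" using smono x(1) h0 by (metis strict_monoD)
  have contx: "isCont h z" for z using smooth_isCont[OF sh, where k=0 and x=z] by simp
  have dh: "DERIV h z :> deriv h z" for z using smooth_DERIV[OF sh] .
  obtain \<eta> :: real where \<eta>: "0 < \<eta>" "\<eta> < x"
    and eq: "((x - h x) - (0 - h 0)) * (m * \<eta>^(m - 1)) = (x^m - 0^m) * (1 - deriv h \<eta>)"
  proof -
    have "\<exists>z. 0 < z \<and> z < x \<and> ((x - h x) - (0 - h 0)) * (real m * z^(m - Suc 0)) = (x^m - 0^m) * (1 - deriv h z)"
      by (rule GMVT'[where f="\<lambda>y. y - h y" and g="\<lambda>y. y^m"])
         (use x(1) contx dh in \<open>auto intro!: continuous_intros derivative_eq_intros\<close>)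
    then show ?thesis using that by auto
  qed
  have m1: "m = Suc (m - 1)" using m by simp
  have eq2: "(x - h x) * (m * \<eta>^(m - 1)) = x^m * (1 - deriv h \<eta>)"
    using eq h0 m by (simp add: zero_power)
  have s_low: "m*c*\<eta>^(m-1) - M*\<eta>^m \<le> 1 - deriv h \<eta>"
    using lead[of \<eta>] \<eta> x by (auto simp: abs_le_iff)
  have P: "0 < m * \<eta>^(m - 1)" using m \<eta> by simp
  have "(c/2) * x^m * (m * \<eta>^(m - 1)) \<le> x^m * (m*c*\<eta>^(m-1) - M*\<eta>^m)"
  proof -
    have "M*\<eta> \<le> M*x" using M \<eta> by (intro mult_left_mono) auto
    moreover have "c \<le> m * c" using m c by (simp add: mult_le_cancel_right1)
    ultimately have "M * \<eta> \<le> m * c / 2" using x(5) by linarith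
    then have "(c/2) * m \<le> m * c - M * \<eta>" by (simp add: mult.commute)
    then have "(c/2) * m * \<eta>^(m-1) \<le> (m * c - M * \<eta>) * \<eta>^(m-1)"
      using \<eta> by (intro mult_right_mono) auto
    also have "\<dots> = m*c*\<eta>^(m-1) - M*\<eta>^m" by (subst (2) m1) (simp add: algebra_simps)
    finally have "(c/2) * m * \<eta>^(m-1) \<le> m*c*\<eta>^(m-1) - M*\<eta>^m" .
    then have "x^m * ((c/2) * m * \<eta>^(m-1)) \<le> x^m * (m*c*\<eta>^(m-1) - M*\<eta>^m)"
      using x by (intro mult_left_mono) auto
    then show ?thesis by (simp add: algebra_simps)
  qed
  also have "\<dots> \<le> x^m * (1 - deriv h \<eta>)" using s_low x by (intro mult_left_mono) auto
  also have "\<dots> = (x - h x) * (m * \<eta>^(m - 1))" using eq2 by simp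
  finally have "(c/2) * x^m * (m * \<eta>^(m - 1)) \<le> (x - h x) * (m * \<eta>^(m - 1))" .
  then have "(c/2) * x^m \<le> x - h x" using P by (rule mult_right_le_imp_le)
  then have hdec: "h x \<le> x - (c/2)*x^m" by simp
  have "F x \<noteq> x \<longrightarrow> (h x / x)^K * \<bar>F x - x\<bar> \<le> \<bar>F (h x) - h x\<bar>"
  proof
    assume Fx: "F x \<noteq> x"
    have Fb: "\<bar>F x - x\<bar> \<le> x/2"
    proof -
      have "\<bar>F x - x\<bar> \<le> A1 * x^2" using A1(2)[of x] x by simp
      also have "\<dots> = (A1 * x) * x" by (simp add: power2_eq_square)
      also have "\<dots> \<le> (1/2) * x" using x by (intro mult_right_mono) auto
      finally show ?thesis by simp
    qed
    obtain \<xi> :: real where \<xi>: "0 < \<xi>" "\<xi> < 2 * x" and mv: "h (F x) - h x = (F x - x) * deriv h \<xi>"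
    proof (cases "F x < x")
      case True
      obtain z where "F x < z" "z < x" "h x - h (F x) = (x - F x) * deriv h z"
        using MVT2[OF True, of h "deriv h"] dh by blast
      moreover have "0 < F x" using Fb x abs_ge_minus_self[of "F x - x"] by linarith
      ultimately show ?thesis using that[of z] by (simp add: algebra_simps)
    next
      case False
      then have lt: "x < F x" using Fx by simp
      obtain z where "x < z" "z < F x" "h (F x) - h x = (F x - x) * deriv h z"
        using MVT2[OF lt, of h "deriv h"] dh by blast
      moreover have "F x < 2 * x" using Fb x abs_ge_self[of "F x - x"] by linarith
      ultimately show ?thesis using that[of z] x by simp
    qed
    define d where "d = deriv h \<xi>"
    have dge: "\<beta> \<le> d" unfolding d_def using hb \<xi> x by simp
    have s_up: "1 - d \<le> A0 * x^(m-1)"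
    proof -
      have "1 - d \<le> m*c*\<xi>^(m-1) + M*\<xi>^m"
        using lead[of \<xi>] \<xi> x unfolding d_def by (auto simp: abs_le_iff)
      also have "\<dots> \<le> m*c*(2*x)^(m-1) + M*(2*x)^m"
        using \<xi> c M by (intro add_mono mult_left_mono power_mono) auto
      also have "\<dots> = m*c*2^(m-1) * x^(m-1) + M * 2^m * x^m" by (simp add: power_mult_distrib)
      also have "\<dots> \<le> m*c*2^(m-1) * x^(m-1) + M * 2^m * x^(m-1)"
        using pow_le_1_mono[of x m] x m M by (intro add_left_mono mult_left_mono) auto
      also have "\<dots> = A0 * x^(m-1)" unfolding A0 by (simp add: algebra_simps)
      finally show ?thesis .
    qed
    define t where "t = (x - h x) / x"
    have t_low: "(c/2) * x^(m-1) \<le> t"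
    proof -
      have "(c/2) * x^m \<le> x - h x" using hdec by simp
      moreover have "x^m = x^(m-1) * x" by (subst m1) (simp add: algebra_simps)
      ultimately have "(c/2) * x^(m-1) * x \<le> x - h x" by (simp add: algebra_simps)
      then show ?thesis unfolding t_def using x by (simp add: field_simps)
    qed
    have "0 \<le> (c/2)*x^m" using c x by simp
    then have hle: "h x \<le> x" using hdec by linarith
    have t01: "0 \<le> t" "t \<le> 1" using hpos hle x unfolding t_def
      by (auto simp: field_simps)
    have hx: "h x / x = 1 - t" unfolding t_def using x by (simp add: field_simps)
    have "1 \<le> d * (1 + K * t)"
    proof -
      have "K * ((c/2) * x^(m-1)) * \<beta> \<le> K * t * d"
        using t_low dge \<beta> c x t01 by (intro mult_mono mult_left_mono) auto
      moreover have "A0 * x^(m-1) \<le> K * ((c/2) * x^(m-1)) * \<beta>"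
      proof -
        have "A0 * x^(m-1) \<le> (K * c * \<beta> / 2) * x^(m-1)" using KA x by (intro mult_right_mono) auto
        then show ?thesis by (simp add: algebra_simps)
      qed
      ultimately show ?thesis using s_up by (simp add: algebra_simps)
    qed
    then have "(1 - t)^K \<le> d"
    proof -
      assume a: "1 \<le> d * (1 + K * t)"
      have pos: "0 < 1 + K * t" using t01 by (simp add: add_pos_nonneg)
      have "(1 - t)^K * (1 + K * t) \<le> d * (1 + K * t)" using one_minus_pow[OF t01, of K] a by linarith
      then show ?thesis using pos by (simp add: mult_le_cancel_right)
    qed
    then have "(h x / x)^K * \<bar>F x - x\<bar> \<le> d * \<bar>F x - x\<bar>" unfolding hx by (intro mult_right_mono) auto
    also have "\<dots> = \<bar>F (h x) - h x\<bar>" using mv comm dge \<beta> unfolding d_def by (simp add: abs_mult)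
    finally show "(h x / x)^K * \<bar>F x - x\<bar> \<le> \<bar>F (h x) - h x\<bar>" .
  qed
  then show ?thesis using hpos hdec by blast
qed


lemma contract:
  fixes h F :: "real \<Rightarrow> real" and c M \<beta> \<epsilon>0 :: real and m :: nat
  assumes sh: "smooth h" and smono: "strict_mono h" and h0: "h 0 = 0"
    and m: "1 \<le> m" and c: "0 < c" and M: "0 \<le> M"
    and lead: "\<And>\<xi>. 0 \<le> \<xi> \<Longrightarrow> \<xi> \<le> 1 \<Longrightarrow> \<bar>(1 - deriv h \<xi>) - m*c*\<xi>^(m-1)\<bar> \<le> M*\<xi>^m"
    and \<beta>: "0 < \<beta>" and \<epsilon>0: "0 < \<epsilon>0" and hb: "\<And>\<xi>. 0 < \<xi> \<Longrightarrow> \<xi> < \<epsilon>0 \<Longrightarrow> \<beta> \<le> deriv h \<xi>"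
    and flat: "\<And>K. 1 \<le> K \<Longrightarrow> \<exists>A\<ge>0. \<forall>x. 0 \<le> x \<and> x \<le> 1 \<longrightarrow> \<bar>F x - x\<bar> \<le> A * x^(K+1)"
    and comm: "\<And>x. h (F x) = F (h x)"
    and acc: "\<And>\<epsilon>. 0 < \<epsilon> \<Longrightarrow> \<exists>y. 0 < y \<and> y < \<epsilon> \<and> F y \<noteq> y"
  shows False
proof -
  define A0 where "A0 = m*c*2^(m-1) + M*2^m"
  define K :: nat where "K = nat \<lceil>2*A0/(c*\<beta>)\<rceil> + 1"
  have K1: "1 \<le> K" unfolding K_def by simp
  have KA: "A0 \<le> K * c * \<beta> / 2"
  proof -
    have "2*A0/(c*\<beta>) \<le> real (nat \<lceil>2*A0/(c*\<beta>)\<rceil>)" by (rule real_nat_ceiling_ge)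
    also have "\<dots> \<le> K" unfolding K_def by simp
    finally have "2*A0/(c*\<beta>) \<le> K" .
    then show ?thesis using c \<beta> by (simp add: field_simps)
  qed
  obtain A1 where A1: "0 \<le> A1" "\<And>x. 0 \<le> x \<and> x \<le> 1 \<Longrightarrow> \<bar>F x - x\<bar> \<le> A1 * x^2"
    using flat[of 1] by (auto simp: power2_eq_square)
  obtain A2 where A2: "0 \<le> A2" "\<And>x. 0 \<le> x \<and> x \<le> 1 \<Longrightarrow> \<bar>F x - x\<bar> \<le> A2 * x^(K+1)"
    using flat[OF K1] by auto
  define \<epsilon> where "\<epsilon> = min (min (1/2) (\<epsilon>0/2)) (min (1/(2*A1+2)) (c/(2*M+2)))"
  have \<epsilon>pos: "0 < \<epsilon>" unfolding \<epsilon>_def using \<epsilon>0 c A1 M by (simp add: add_pos_nonneg)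
  have step: "0 < h x \<and> h x \<le> x - (c/2)*x^m \<and>
     (F x \<noteq> x \<longrightarrow> (h x / x)^K * \<bar>F x - x\<bar> \<le> \<bar>F (h x) - h x\<bar>)"
    if x: "0 < x" "x < \<epsilon>" for x
  proof -
    have A1': "\<bar>F y - y\<bar> \<le> A1 * y^2" if "0 \<le> y" "y \<le> 1" for y using A1(2) that by auto
    have x1: "x \<le> 1/2" "2 * x < \<epsilon>0" using x unfolding \<epsilon>_def by auto
    have "x \<le> 1/(2*A1+2)" using x unfolding \<epsilon>_def by auto
    then have "(2*A1+2) * x \<le> 1" using A1 by (simp add: field_simps)
    then have x2: "A1 * x \<le> 1/2" using x by (simp add: algebra_simps)
    have "x \<le> c/(2*M+2)" using x unfolding \<epsilon>_def by auto
    then have "(2*M+2) * x \<le> c" using M by (simp add: field_simps)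
    then have x3: "M * x \<le> c/2" using x by (simp add: algebra_simps)
    show ?thesis
      by (rule contract_step[OF sh smono h0 m c M lead \<beta> hb A0_def KA A1(1) A1' comm x(1) x1 x2 x3])
  qed
  obtain x0 where x0: "0 < x0" "x0 < \<epsilon>" "F x0 \<noteq> x0" using acc[OF \<epsilon>pos] by blast
  define D0 where "D0 = \<bar>F x0 - x0\<bar>"
  have D0: "0 < D0" unfolding D0_def using x0 by simp
  define xs where "xs n = (h^^n) x0" for n
  have xs_Suc: "xs (Suc n) = h (xs n)" for n unfolding xs_def by simp
  have inv: "0 < xs n \<and> xs n \<le> x0 \<and> (xs n / x0)^K * D0 \<le> \<bar>F (xs n) - xs n\<bar>" for n
  proof (induction n)
    case 0 then show ?case using x0 by (simp add: xs_def D0_def)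
  next
    case (Suc n)
    let ?x = "xs n"
    have xn: "0 < ?x" "?x < \<epsilon>" using Suc x0 by auto
    have pos: "0 < (?x / x0)^K * D0" using xn x0 D0 by simp
    then have Fne: "F ?x \<noteq> ?x" using Suc by auto
    note st = step[OF xn]
    have "0 \<le> (c/2)*?x^m" using c xn by simp
    then have le: "h ?x \<le> ?x" using st by linarith
    have "(h ?x / x0)^K * D0 = (h ?x / ?x)^K * ((?x / x0)^K * D0)"
      using xn x0 by (simp add: power_divide field_simps)
    also have "\<dots> \<le> (h ?x / ?x)^K * \<bar>F ?x - ?x\<bar>"
      using Suc st xn by (intro mult_left_mono) auto
    also have "\<dots> \<le> \<bar>F (h ?x) - h ?x\<bar>" using st Fne by auto
    finally show ?case using st le Suc by (simp add: xs_Suc)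
  qed
  have "0 < A2" 
  proof (rule ccontr)
    assume "\<not> 0 < A2" then have "A2 = 0" using A2 by simp
    then have "\<bar>F x0 - x0\<bar> \<le> 0" using A2(2)[of x0] x0 \<epsilon>_def by auto
    then show False using D0 D0_def by simp
  qed
  define lb where "lb = D0 / (x0^K * A2)"
  have lb: "0 < lb" unfolding lb_def using D0 x0 \<open>0 < A2\<close> by simp
  have lower: "lb \<le> xs n" for n
  proof -
    have xn: "0 < xs n" "xs n \<le> x0" using inv[of n] by auto
    have "(xs n / x0)^K * D0 \<le> A2 * xs n^(K+1)"
      using inv[of n] A2(2)[of "xs n"] xn x0 \<epsilon>_def by force
    then have "xs n^K * D0 / x0^K \<le> xs n^K * (A2 * xs n)"
      by (simp add: power_divide algebra_simps)
    then have "xs n^K * (D0 / x0^K) \<le> xs n^K * (A2 * xs n)" by (simp add: algebra_simps)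
    moreover have "0 < xs n^K" using xn by simp
    ultimately have "D0 / x0^K \<le> A2 * xs n" by (rule mult_left_le_imp_le)
    then show ?thesis unfolding lb_def using \<open>0 < A2\<close> x0 by (simp add: field_simps)
  qed
  define d where "d = (c/2) * lb^m"
  have d: "0 < d" unfolding d_def using c lb by simp
  have dec: "xs n \<le> x0 - n * d" for n
  proof (induction n)
    case 0 then show ?case by (simp add: xs_def)
  next
    case (Suc n)
    have xn: "0 < xs n" "xs n < \<epsilon>" using inv[of n] x0 by auto
    have "h (xs n) \<le> xs n - (c/2) * xs n^m" using step[OF xn] by blast
    moreover have "d \<le> (c/2) * xs n^m" unfolding d_def using lower[of n] lb c
      by (intro mult_left_mono power_mono) auto
    ultimately show ?case using Suc by (simp add: xs_Suc algebra_simps)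
  qed
  obtain n :: nat where "x0 < n * d" using reals_Archimedean3[OF d] by blast
  then show False using dec[of n] inv[of n] by linarith
qed



lemma cont_eps:
  fixes f :: "real \<Rightarrow> real"
  assumes "isCont f a" "0 < r"
  shows "\<exists>s>0. \<forall>x. \<bar>x - a\<bar> < s \<longrightarrow> \<bar>f x - f a\<bar> < r"
proof -
  from assms(1) have "f \<midarrow>a\<rightarrow> f a" by (simp add: isCont_def)
  then obtain s where s: "s > 0" "\<And>x. x \<noteq> a \<and> norm (x - a) < s \<Longrightarrow> norm (f x - f a) < r"
    using assms(2) unfolding LIM_eq by blast
  show ?thesis
  proof (intro exI[of _ s] conjI allI impI)
    fix x assume "\<bar>x - a\<bar> < s"
    then show "\<bar>f x - f a\<bar> < r" using s assms(2) by (cases "x = a") auto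
  qed (use s in auto)
qed

lemma deriv_pos_of_inv:
  assumes sh: "smooth h" and sih: "smooth (inv h)" and bh: "bij h" and smono: "strict_mono h"
  shows "0 < deriv h 0"
proof -
  have ih: "inv h (h x) = x" for x using bh by (simp add: bij_is_inj)
  have "DERIV (\<lambda>x. inv h (h x)) 0 :> deriv (inv h) (h 0) * deriv h 0"
    by (rule DERIV_chain2[OF smooth_DERIV[OF sih] smooth_DERIV[OF sh]])
  moreover have "DERIV (\<lambda>x. inv h (h x)) 0 :> 1" unfolding ih by (rule DERIV_ident)
  ultimately have "deriv (inv h) (h 0) * deriv h 0 = 1" by (rule DERIV_unique)
  then have ne: "deriv h 0 \<noteq> 0" by auto
  have "\<not> deriv h 0 < 0"
  proof
    assume "deriv h 0 < 0"
    then obtain d where "d > 0" "\<And>t. t > 0 \<Longrightarrow> t < d \<Longrightarrow> h 0 > h (0 + t)"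
      using DERIV_neg_dec_right[OF smooth_DERIV[OF sh]] by blast
    then have "h 0 > h (d/2)" by simp
    moreover have "h 0 < h (d/2)" using smono \<open>d > 0\<close> by (simp add: strict_mono_less)
    ultimately show False by simp
  qed
  then show ?thesis using ne by simp
qed

lemma not_contract:
  fixes h F :: "real \<Rightarrow> real"
  assumes sh: "smooth h" and smono: "strict_mono h" and h0: "h 0 = 0" and dpos: "0 < deriv h 0"
    and flat: "\<And>K. 1 \<le> K \<Longrightarrow> \<exists>A\<ge>0. \<forall>x. 0 \<le> x \<and> x \<le> 1 \<longrightarrow> \<bar>F x - x\<bar> \<le> A * x^(K+1)"
    and comm: "\<And>x. h (F x) = F (h x)"
    and acc: "\<And>\<epsilon>. 0 < \<epsilon> \<Longrightarrow> \<exists>y. 0 < y \<and> y < \<epsilon> \<and> F y \<noteq> y"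
    and T: "taylor0 h \<noteq> fps_X"
  shows "\<exists>\<epsilon>>0. \<forall>x. 0 < x \<and> x < \<epsilon> \<longrightarrow> x < h x"
proof -
  have ex: "\<exists>j. taylor0 h $ j \<noteq> fps_X $ j" using T fps_ext by blast
  define m where "m = (LEAST j. taylor0 h $ j \<noteq> fps_X $ j)"
  have mne: "taylor0 h $ m \<noteq> fps_X $ m" unfolding m_def using ex by (rule LeastI_ex)
  have below: "taylor0 h $ j = fps_X $ j" if "j < m" for j
    using not_less_Least[OF that[unfolded m_def]] by blast
  have m1: "1 \<le> m" using mne h0 by (cases m) auto
  define c where "c = fps_X $ m - taylor0 h $ m"
  have c0: "c \<noteq> 0" unfolding c_def using mne by simp
  have low: "(deriv^^j) h 0 = (if j = 1 then 1 else 0)" if "j < m" for j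
    using below[OF that] by (simp add: taylor0_nth split: if_splits)
  have top: "(deriv^^m) h 0 = (if m = 1 then 1 else 0) - c * fact m"
    unfolding c_def by (simp add: taylor0_nth)
  obtain M where M: "0 \<le> M" and lead: "\<And>\<xi>. 0 \<le> \<xi> \<and> \<xi> \<le> 1 \<Longrightarrow> \<bar>(1 - deriv h \<xi>) - m * c * \<xi>^(m-1)\<bar> \<le> M * \<xi>^m"
    using lead_bound[OF sh m1 low top] by blast
  show ?thesis
  proof (cases "c > 0")
    case True
    obtain s where s: "s > 0" "\<And>x. \<bar>x - 0\<bar> < s \<Longrightarrow> \<bar>deriv h x - deriv h 0\<bar> < deriv h 0 / 2"
    proof -
      have "0 < deriv h 0 / 2" using dpos by simp
      from cont_eps[OF smooth_isCont[OF smooth_deriv[OF sh], where k=0 and x=0] this]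
      show ?thesis using that by auto
    qed
    have hb: "deriv h 0 / 2 \<le> deriv h \<xi>" if "0 < \<xi>" "\<xi> < s" for \<xi>
      using s(2)[of \<xi>] that abs_ge_minus_self[of "deriv h \<xi> - deriv h 0"] by auto
    have False
      by (rule contract[OF sh smono h0 m1 True M _ _ s(1) hb flat comm acc])
         (use lead dpos in auto)
    then show ?thesis ..
  next
    case False
    then have cneg: "c < 0" using c0 by simp
    define \<epsilon> where "\<epsilon> = min 1 (- c / (M + 1))"
    have \<epsilon>: "0 < \<epsilon>" unfolding \<epsilon>_def using cneg M by (simp add: divide_neg_pos)
    have hd: "1 < deriv h \<xi>" if "0 < \<xi>" "\<xi> < \<epsilon>" for \<xi>
    proof -
      have x1: "\<xi> \<le> 1" using that unfolding \<epsilon>_def by simp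
      have "\<xi> < - c / (M + 1)" using that unfolding \<epsilon>_def by simp
      then have "\<xi> * (M + 1) < - c" using M by (simp add: field_simps)
      moreover have "M*\<xi> \<le> \<xi>*(M+1)" using that by (simp add: algebra_simps)
      ultimately have "M * \<xi> < - c" by linarith
      moreover have "m * c \<le> c" using m1 cneg by (simp add: mult_le_cancel_right2)
      ultimately have neg: "m * c + M * \<xi> < 0" by linarith
      have "1 - deriv h \<xi> \<le> m * c * \<xi>^(m-1) + M * \<xi>^m" using lead[of \<xi>] that x1 by (auto simp: abs_le_iff)
      also have "\<dots> = \<xi>^(m-1) * (m * c + M * \<xi>)"
      proof -
        have "\<xi>^m = \<xi>^(m-1) * \<xi>" using m1 by (metis Suc_diff_1 less_le_trans power_Suc2 zero_less_one)
        then show ?thesis by (simp add: algebra_simps)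
      qed
      also have "\<dots> < 0" using neg that by (simp add: mult_pos_neg)
      finally show ?thesis by simp
    qed
    show ?thesis
    proof (intro exI[of _ \<epsilon>] conjI allI impI)
      fix x assume x: "0 < x \<and> x < \<epsilon>"
      then obtain z where z: "0 < z" "z < x" "h x - h 0 = (x - 0) * deriv h z"
        using MVT2[of 0 x h "deriv h"] smooth_DERIV[OF sh] by auto
      have "1 < deriv h z" using hd z x by simp
      then have "x * 1 < x * deriv h z" using x by simp
      then show "x < h x" using z h0 by simp
    qed (use \<epsilon> in auto)
  qed
qed


lemma kopell:
  fixes h F :: "real \<Rightarrow> real"
  assumes dp: "diffeo_plus h" and h0: "h 0 = 0"
    and flat: "\<And>K. 1 \<le> K \<Longrightarrow> \<exists>A\<ge>0. \<forall>x. 0 \<le> x \<and> x \<le> 1 \<longrightarrow> \<bar>F x - x\<bar> \<le> A * x^(K+1)"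
    and comm: "\<And>x. h (F x) = F (h x)"
    and acc: "\<And>\<epsilon>. 0 < \<epsilon> \<Longrightarrow> \<exists>y. 0 < y \<and> y < \<epsilon> \<and> F y \<noteq> y"
  shows "taylor0 h = fps_X"
proof (rule ccontr)
  assume T: "taylor0 h \<noteq> fps_X"
  have bh: "bij h" and sh: "smooth h" and sih: "smooth (inv h)" and smono: "strict_mono h"
    using dp unfolding diffeo_plus_def diffeo_def by auto
  have ih: "inv h (h x) = x" for x using bh by (simp add: bij_is_inj)
  have hi: "h (inv h y) = y" for y using bh by (simp add: bij_is_surj surj_f_inv_f)
  have ih0: "inv h 0 = 0" using ih[of 0] h0 by simp
  have bih: "bij (inv h)" using bh by (rule bij_imp_bij_inv)
  have iih: "inv (inv h) = h" using bh by (rule inv_inv_eq)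
  have smono_i: "strict_mono (inv h)"
  proof (rule strict_monoI)
    fix x y :: real assume "x < y"
    show "inv h x < inv h y"
    proof (rule ccontr)
      assume "\<not> inv h x < inv h y"
      then have "inv h y \<le> inv h x" by simp
      then have "h (inv h y) \<le> h (inv h x)" using smono by (simp add: strict_mono_less_eq)
      then show False using \<open>x < y\<close> hi by simp
    qed
  qed
  have comm_i: "inv h (F y) = F (inv h y)" for y
    using comm[of "inv h y"] hi ih by metis
  have T_i: "taylor0 (inv h) \<noteq> fps_X"
  proof
    assume Ti: "taylor0 (inv h) = fps_X"
    have "h \<circ> inv h = (\<lambda>x. x)" using hi by (auto simp: fun_eq_iff)
    then have "taylor0 h oo taylor0 (inv h) = fps_X"
      using taylor0_comp[OF sh sih ih0] taylor0_id by metis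
    then show False using Ti T by simp
  qed
  obtain e1 where e1: "e1 > 0" "\<And>x. 0 < x \<and> x < e1 \<Longrightarrow> x < h x"
    using not_contract[OF sh smono h0 deriv_pos_of_inv[OF sh sih bh smono] flat comm acc T] by blast
  have dpi: "0 < deriv (inv h) 0"
    using deriv_pos_of_inv[OF sih _ bih smono_i] sh iih by simp
  obtain e2 where e2: "e2 > 0" "\<And>x. 0 < x \<and> x < e2 \<Longrightarrow> x < inv h x"
    using not_contract[OF sih smono_i ih0 dpi flat comm_i acc T_i] by blast
  obtain s where s: "s > 0" "\<And>x. \<bar>x - 0\<bar> < s \<Longrightarrow> \<bar>h x - h 0\<bar> < e2"
    using cont_eps[OF smooth_isCont[OF sh, where k=0 and x=0] e2(1)] by auto
  define x where "x = min e1 s / 2"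
  have x: "0 < x" "x < e1" "x < s" unfolding x_def using e1 s by auto
  have hx: "x < h x" using e1(2) x by simp
  have "\<bar>h x\<bar> < e2" using s(2)[of x] x h0 by simp
  then have "h x < inv h (h x)" using e2(2)[of "h x"] hx x by simp
  then show False using ih hx by simp
qed

theorem theorem4p3:
  fixes f g :: "real \<Rightarrow> real"
  assumes "diffeo_minus f" and "diffeo_minus g"
    and "f 0 = 0" and "g 0 = 0"
    and "f \<circ> f = g \<circ> g"
    and "fps_compose (taylor0 f) (taylor0 f) = fps_X"
    and "0 \<in> frontier {x. f (f x) = x}"
  shows "(\<exists>h. diffeo_plus h \<and> f = inv h \<circ> g \<circ> h) \<longleftrightarrow> taylor0 f = taylor0 g"
proof
  assume "taylor0 f = taylor0 g"
  then show "\<exists>h. diffeo_plus h \<and> f = inv h \<circ> g \<circ> h"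
    using reverse_dir assms by blast
next
  assume "\<exists>h. diffeo_plus h \<and> f = inv h \<circ> g \<circ> h"
  then obtain h where dp: "diffeo_plus h" and conj: "f = inv h \<circ> g \<circ> h" by blast
  note df = assms(1) and dg = assms(2) and f0 = assms(3) and g0 = assms(4)
  note Fa = dm_facts[OF df] and Ga = dm_facts[OF dg]
  have bh: "bij h" and sh: "smooth h" and sih: "smooth (inv h)" and smono: "strict_mono h"
    using dp unfolding diffeo_plus_def diffeo_def by auto
  have hi: "h (inv h y) = y" for y using bh by (simp add: bij_is_surj surj_f_inv_f)
  have hf: "h (f x) = g (h x)" for x using conj hi by simp
  have h0: "h 0 = 0"
  proof -
    have fix0: "g (h 0) = h 0" using hf[of 0] f0 by simp
    show ?thesis
    proof (rule ccontr)
      assume "h 0 \<noteq> 0"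
      then consider "0 < h 0" | "h 0 < 0" by linarith
      then show False
      proof cases
        case 1 then have "g (h 0) < g 0" using Ga(6) by blast
        then show False using fix0 g0 1 by simp
      next
        case 2 then have "g 0 < g (h 0)" using Ga(6) by blast
        then show False using fix0 g0 2 by simp
      qed
    qed
  qed
  have ffx: "f (f x) = g (g x)" for x using assms(5) by (metis comp_apply)
  define F where "F = (\<lambda>x. f (f x))"
  have sF: "smooth F" unfolding F_def by (rule smooth_comp[OF Fa(2) Fa(2)])
  have TF: "taylor0 F = fps_X"
    using taylor0_comp[OF Fa(2) Fa(2) f0] assms(6) unfolding F_def by (simp add: o_def)
  have TF': "(deriv^^k) F 0 = (if k = 1 then 1 else 0)" for k
    using TF by (simp add: taylor0_eq_X_iff)
  have flat: "\<exists>A\<ge>0. \<forall>x. 0 \<le> x \<and> x \<le> 1 \<longrightarrow> \<bar>F x - x\<bar> \<le> A * x^(K+1)" if "1 \<le> K" for K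
    by (rule flat_bound[OF sF TF' that])
  have comm: "h (F x) = F (h x)" for x
  proof -
    have "h (f (f x)) = g (h (f x))" by (rule hf)
    also have "\<dots> = g (g (h x))" by (simp add: hf)
    also have "\<dots> = f (f (h x))" by (simp add: ffx)
    finally show ?thesis unfolding F_def .
  qed
  have F0: "F 0 = 0" unfolding F_def using f0 by simp
  have acc: "\<exists>y. 0 < y \<and> y < \<epsilon> \<and> F y \<noteq> y" if \<epsilon>: "0 < \<epsilon>" for \<epsilon>
  proof -
    have "0 \<notin> interior {x. f (f x) = x}" using assms(7) by (simp add: frontier_def)
    then have ni: "\<not> ball 0 e \<subseteq> {x. F x = x}" if "e > 0" for e
      using that unfolding mem_interior F_def by blast
    obtain s where s: "s > 0" "\<And>x. \<bar>x - 0\<bar> < s \<Longrightarrow> \<bar>f x - f 0\<bar> < \<epsilon>"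
      using cont_eps[OF smooth_isCont[OF Fa(2), where k=0 and x=0] \<epsilon>] by auto
    have "\<not> ball 0 (min \<epsilon> s) \<subseteq> {x. F x = x}" using ni s \<epsilon> by simp
    then obtain y where y0: "y \<in> ball 0 (min \<epsilon> s)" "F y \<noteq> y" by blast
    then have y: "\<bar>y\<bar> < min \<epsilon> s" "F y \<noteq> y" by (auto simp: dist_norm)
    have "y \<noteq> 0" using y F0 by auto
    then consider "0 < y" | "y < 0" by linarith
    then show ?thesis
    proof cases
      case 1 then show ?thesis using y by auto
    next
      case 2
      have fy: "0 < f y" using Fa(6)[OF 2] f0 by simp
      have "\<bar>f y\<bar> < \<epsilon>" using s(2)[of y] y f0 by simp
      moreover have "F (f y) \<noteq> f y"
      proof
        assume "F (f y) = f y"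
        then have "f (F y) = f y" unfolding F_def by simp
        then have "F y = y" using Fa(1) by (metis bij_is_inj injD)
        then show False using y by simp
      qed
      ultimately show ?thesis using fy by auto
    qed
  qed
  have Th: "taylor0 h = fps_X" by (rule kopell[OF dp h0 flat comm acc])
  have "taylor0 (h \<circ> f) = taylor0 (g \<circ> h)" using hf by (simp add: o_def)
  then have "taylor0 h oo taylor0 f = taylor0 g oo taylor0 h"
    using taylor0_comp[OF sh Fa(2) f0] taylor0_comp[OF Ga(2) sh h0] by simp
  then show "taylor0 f = taylor0 g" using Th f0 by simp
qed


end
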